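(* Let $c\geq 0$ and let $n>c$ be a real number. For $k\in\mathbb{N}_0$ and $x\geq 0$ let $$p_{n,k}^{[c]}(x)=(-1)^k\binom{-n/c}{k}(cx)^k(1+cx)^{-\frac{n}{c}-k}\ \text{ if } c>0,\qquad p_{n,k}^{[0]}(x)=\frac{(nx)^k}{k!}e^{-nx}.$$ Then the Shannon entropy $$H_{n,c}(x)=-\sum_{k=0}^\infty p_{n,k}^{[c]}(x)\log p_{n,k}^{[c]}(x)$$ is concave and increasing on $[0,+\infty)$.
   Context: For $\alpha\in\mathbb{R}$ and $k\in\mathbb{N}$, $\binom{\alpha}{k}=\frac{\alpha(\alpha-1)\cdots(\alpha-k+1)}{k!}$ and $\binom{\alpha}{0}=1$. For each $x\geq0$, $(p_{n,k}^{[c]}(x))_{k\geq 0}$ is a probability distribution (negative binomial type for $c>0$, Poisson for $c=0$), with the convention $0\log 0=0$. *)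

theory Defs
  imports "HOL-Analysis.Analysis"
begin

definition p_basis :: "real \<Rightarrow> real \<Rightarrow> nat \<Rightarrow> real \<Rightarrow> real" where
  "p_basis c n k x =
     (if c > 0 then (-1) ^ k * ((- n / c) gchoose k) * (c * x) ^ k * (1 + c * x) powr (- n / c - real k)
      else (n * x) ^ k / fact k * exp (- n * x))"

text \<open>Shannon entropy with convention 0 log 0 = 0 (note ln 0 = 0 in Isabelle, so p * ln p = 0 for p = 0).\<close>
definition shannon_entropy :: "real \<Rightarrow> real \<Rightarrow> real \<Rightarrow> real" where
  "shannon_entropy c n x = - (\<Sum>k. p_basis c n k x * ln (p_basis c n k x))"

end

theory Submission imports Defs "HOL-Real_Asymp.Real_Asymp" begin


lemma chord_zero:
  fixes f :: "real \<Rightarrow> real"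
  assumes conc: "concave_on {0<..} f" and nn: "\<And>x. x > 0 \<Longrightarrow> f x \<ge> 0"
    and z: "0 < z" "z < y"
  shows "z / y * f y \<le> f z"
proof -
  have ev: "\<forall>\<^sub>F e in at_right 0. (z - e) / (y - e) * f y \<le> f z"
  proof -
    have "\<forall>\<^sub>F e in at_right (0::real). 0 < e \<and> e < z"
      using eventually_at_right_real[OF z(1)] by (auto elim: eventually_mono)
    then show ?thesis
    proof (rule eventually_mono)
      fix e :: real assume e: "0 < e \<and> e < z"
      define s where "s = (z - e) / (y - e)"
      have s01: "0 \<le> s" "s \<le> 1" using e z by (auto simp: s_def field_simps)
      have nz: "y - e \<noteq> 0" using e z by auto
      have "s * (y - e) = z - e" using nz by (simp add: s_def)
      then have zz: "(1 - s) *\<^sub>R e + s *\<^sub>R y = z" by (simp add: algebra_simps)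
      have "(1 - s) * f e + s * f y \<le> f ((1 - s) *\<^sub>R e + s *\<^sub>R y)"
        using concave_onD[OF conc s01] e z by auto
      moreover have "(1 - s) * f e \<ge> 0" using s01 nn[of e] e by auto
      ultimately show "(z - e) / (y - e) * f y \<le> f z" using zz by (simp add: s_def)
    qed
  qed
  have lim: "((\<lambda>e. (z - e) / (y - e) * f y) \<longlongrightarrow> (z - 0) / (y - 0) * f y) (at_right 0)"
    using z by (intro tendsto_intros) auto
  have "(z - 0) / (y - 0) * f y \<le> f z"
    by (rule tendsto_le[OF _ tendsto_const lim ev]) simp
  then show ?thesis by simp
qed

lemma concave_extend0:
  fixes f :: "real \<Rightarrow> real"
  assumes conc: "concave_on {0<..} f" and nn: "\<And>x. x \<ge> 0 \<Longrightarrow> f x \<ge> 0" and f0: "f 0 = 0"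
  shows "concave_on {0..} f"
  unfolding concave_on_def
proof (rule convex_onI)
  show "convex {0::real..}" by simp
  fix t x y :: real assume t: "0 < t" "t < 1" and x: "x \<in> {0..}" and y: "y \<in> {0..}"
  have nn': "\<And>x. x > 0 \<Longrightarrow> f x \<ge> 0" using nn by auto
  show "- f ((1 - t) *\<^sub>R x + t *\<^sub>R y) \<le> (1 - t) * - f x + t * - f y"
  proof (cases "x = 0")
    case x0: True
    show ?thesis
    proof (cases "y = 0")
      case True then show ?thesis using x0 f0 by simp
    next
      case False
      then have "y > 0" using y by auto
      have "t * y / y * f y \<le> f (t * y)"
        using chord_zero[OF conc nn', of "t*y" y] \<open>y>0\<close> t by (simp add: mult_less_cancel_right2)
      then show ?thesis using x0 f0 \<open>y>0\<close> by simp
    qed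
  next
    case False
    then have "x > 0" using x by auto
    show ?thesis
    proof (cases "y = 0")
      case True
      have "(1-t) * x / x * f x \<le> f ((1-t) * x)"
        using chord_zero[OF conc nn', of "(1-t)*x" x] \<open>x>0\<close> t by (simp add: mult_less_cancel_right2)
      then show ?thesis using True f0 \<open>x>0\<close> by simp
    next
      case False
      then have "y > 0" using y by auto
      have "(1 - t) * f x + t * f y \<le> f ((1 - t) *\<^sub>R x + t *\<^sub>R y)"
        using concave_onD[OF conc, of t x y] t \<open>x>0\<close> \<open>y>0\<close> by auto
      then show ?thesis by simp
    qed
  qed
qed

lemma concave_mono:
  fixes f :: "real \<Rightarrow> real"
  assumes conc: "concave_on {0..} f" and nn: "\<And>x. x \<ge> 0 \<Longrightarrow> f x \<ge> 0"
  shows "mono_on {0..} f"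
proof (rule mono_onI)
  fix x y :: real assume x: "x \<in> {0..}" and y: "y \<in> {0..}" and xy: "x \<le> y"
  show "f x \<le> f y"
  proof (cases "x = y")
    case True then show ?thesis by simp
  next
    case False
    then have xy': "x < y" using xy by auto
    have ev: "\<forall>\<^sub>F z in at_top. (z - y) / (z - x) * f x \<le> f y"
      using eventually_gt_at_top[of y]
    proof (rule eventually_mono)
      fix z assume z: "y < z"
      define s where "s = (y - x) / (z - x)"
      have s01: "0 \<le> s" "s \<le> 1" using xy' z by (auto simp: s_def field_simps)
      have nz: "z - x \<noteq> 0" using xy' z by auto
      have "s * (z - x) = y - x" using nz by (simp add: s_def)
      then have yy: "(1 - s) *\<^sub>R x + s *\<^sub>R z = y" by (simp add: algebra_simps)
      have "(1 - s) * f x + s * f z \<le> f ((1 - s) *\<^sub>R x + s *\<^sub>R z)"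
        using concave_onD[OF conc s01, of x z] x y z by auto
      moreover have "s * f z \<ge> 0" using s01 nn[of z] x y z by auto
      moreover have "1 - s = (z - y) / (z - x)" using xy' z by (simp add: s_def field_simps)
      ultimately show "(z - y) / (z - x) * f x \<le> f y" using yy by simp
    qed
    have lim: "((\<lambda>z. (z - y) / (z - x) * f x) \<longlongrightarrow> 1 * f x) at_top"
      by (intro tendsto_intros) real_asymp
    show ?thesis using tendsto_le[OF _ tendsto_const lim ev] by simp
  qed
qed

lemma concave_scale:
  fixes f K :: "real \<Rightarrow> real"
  assumes conc: "concave_on {0<..} K" and b: "b > 0" and eq: "\<And>x. x > 0 \<Longrightarrow> f x = K (b * x)"
  shows "concave_on {0<..} f"
  unfolding concave_on_def
proof (rule convex_onI)
  show "convex {0::real<..}" by simp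
  fix t x y :: real assume t: "0 < t" "t < 1" and x: "x \<in> {0<..}" and y: "y \<in> {0<..}"
  have p: "(1 - t) *\<^sub>R x + t *\<^sub>R y > 0" using t x y
    by (simp add: add_pos_pos)
  have "(1 - t) * K (b*x) + t * K (b*y) \<le> K ((1 - t) *\<^sub>R (b*x) + t *\<^sub>R (b*y))"
    using concave_onD[OF conc, of t "b*x" "b*y"] t x y b by auto
  also have "(1 - t) *\<^sub>R (b*x) + t *\<^sub>R (b*y) = b * ((1 - t) *\<^sub>R x + t *\<^sub>R y)"
    by (simp add: algebra_simps)
  finally show "- f ((1 - t) *\<^sub>R x + t *\<^sub>R y) \<le> (1 - t) * - f x + t * - f y"
    using eq[OF p] eq[of x] eq[of y] x y by simp
qed



lemma plnp_nonpos: "0 \<le> p \<Longrightarrow> p \<le> (1::real) \<Longrightarrow> p * ln p \<le> 0"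
  by (cases "p = 0") (auto intro: mult_nonneg_nonpos)

lemma term_le_sums: "f sums s \<Longrightarrow> (\<And>n. 0 \<le> f n) \<Longrightarrow> f k \<le> (s::real)"
  using sum_le_suminf[of f "{k}"] by (auto simp: sums_iff)

lemma exp_sums: "(\<lambda>k. l^k / fact k) sums exp (l::real)"
  using exp_converges[of l] by (simp add: divide_inverse mult.commute)

lemma ln_fact_bounds: "0 \<le> ln (fact k :: real) \<and> ln (fact k :: real) \<le> 2^k"
proof (induction k)
  case 0 then show ?case by simp
next
  case (Suc k)
  have k: "real k < 2^k" using less_exp[of k]
    by (metis of_nat_less_iff of_nat_numeral of_nat_power)
  have "ln (fact (Suc k) :: real) = ln (real (Suc k)) + ln (fact k)"
    by (simp add: ln_mult del: of_nat_Suc)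
  moreover have "ln (real (Suc k)) \<le> real k" using ln_le_minus_one[of "real (Suc k)"] by simp
  moreover have "ln (real (Suc k)) \<ge> 0" by simp
  ultimately have "ln (fact (Suc k) :: real) \<le> real k + 2^k" using Suc by linarith
  moreover have "(2::real)^Suc k = 2 * 2^k" by simp
  ultimately show ?case using k Suc \<open>ln (real (Suc k)) \<ge> 0\<close> \<open>ln (fact (Suc k) :: real) = ln (real (Suc k)) + ln (fact k)\<close>
    by linarith
qed

definition sP :: "nat \<Rightarrow> real" where "sP k = ln (fact k) / fact k"

lemma sP_summable: "summable (\<lambda>k. sP k * z^k)"
proof (rule summable_comparison_test)
  show "summable (\<lambda>k. inverse (fact k) * (2 * \<bar>z\<bar>)^k)" by (rule summable_exp)
  show "\<exists>N. \<forall>n\<ge>N. norm (sP n * z ^ n) \<le> inverse (fact n) * (2 * \<bar>z\<bar>) ^ n"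
  proof (intro exI allI impI)
    fix n :: nat
    have "norm (sP n * z ^ n) = ln (fact n) / fact n * \<bar>z\<bar>^n"
      using ln_fact_bounds[of n] by (simp add: sP_def abs_mult power_abs)
    also have "\<dots> \<le> 2^n / fact n * \<bar>z\<bar>^n"
      using ln_fact_bounds[of n] by (intro mult_right_mono divide_right_mono) auto
    also have "\<dots> = inverse (fact n) * (2 * \<bar>z\<bar>) ^ n" by (simp add: power_mult_distrib field_simps)
    finally show "norm (sP n * z ^ n) \<le> inverse (fact n) * (2 * \<bar>z\<bar>) ^ n" .
  qed
qed

lemma sP1_summable: "summable (\<lambda>k. diffs sP k * z^k)"
  by (rule termdiff_converges_all) (rule sP_summable)
lemma sP2_summable: "summable (\<lambda>k. diffs (diffs sP) k * z^k)"
  by (rule termdiff_converges_all) (rule sP1_summable)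

definition "SP z = (\<Sum>k. sP k * z^k)"
definition "SP1 z = (\<Sum>k. diffs sP k * z^k)"
definition "SP2 z = (\<Sum>k. diffs (diffs sP) k * z^k)"

lemma SP_deriv: "(SP has_real_derivative SP1 z) (at z)"
  unfolding SP_def SP1_def by (rule termdiffs_strong_converges_everywhere) (rule sP_summable)
lemma SP1_deriv: "(SP1 has_real_derivative SP2 z) (at z)"
  unfolding SP1_def SP2_def by (rule termdiffs_strong_converges_everywhere) (rule sP1_summable)

definition "KP l = l - l * ln l + exp (-l) * SP l"
definition "KP1 l = - ln l + exp (-l) * (SP1 l - SP l)"
definition "KP2 l = - 1 / l + exp (-l) * (SP l - 2 * SP1 l + SP2 l)"

lemma KP_deriv: "l > 0 \<Longrightarrow> (KP has_real_derivative KP1 l) (at l)"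
  unfolding KP_def[abs_def] KP1_def
  by (rule derivative_eq_intros SP_deriv refl | simp)+ (simp add: algebra_simps)

lemma KP1_deriv: "l > 0 \<Longrightarrow> (KP1 has_real_derivative KP2 l) (at l)"
  unfolding KP1_def[abs_def] KP2_def
  by (rule derivative_eq_intros SP_deriv SP1_deriv refl | simp)+ (simp add: algebra_simps)

lemma fact_div: "real (Suc k) * (L / fact (Suc k)) = L / (fact k::real)"
proof -
  have "fact (Suc k) = real (Suc k) * (fact k :: real)" by simp
  then show ?thesis by (simp del: fact_Suc of_nat_Suc add: field_simps)
qed
lemma diffs_sP: "diffs sP k = ln (fact (Suc k)) / fact k"
  unfolding diffs_def sP_def by (rule fact_div)
lemma diffs2_sP: "diffs (diffs sP) k = ln (fact (Suc (Suc k))) / fact k"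
  unfolding diffs_def[of "diffs sP"] diffs_sP by (rule fact_div)

lemma dP_eq: "sP k - 2 * diffs sP k + diffs (diffs sP) k = (ln (real k + 2) - ln (real k + 1)) / fact k"
proof -
  have a: "ln (fact (Suc k) :: real) = ln (real k + 1) + ln (fact k)"
    by (simp add: ln_mult add.commute)
  have b: "ln (fact (Suc (Suc k)) :: real) = ln (real k + 2) + ln (fact (Suc k))"
    by (subst fact_Suc) (simp add: ln_mult add.commute del: fact_Suc)
  show ?thesis unfolding diffs_sP diffs2_sP sP_def b a by (simp add: field_simps)
qed

lemma KP2_nonpos: "l > 0 \<Longrightarrow> KP2 l \<le> 0"
proof -
  assume l: "l > 0"
  define d where "d k = sP k - 2 * diffs sP k + diffs (diffs sP) k" for k
  have s: "(\<lambda>k. d k * l^k) sums (SP l - 2 * SP1 l + SP2 l)"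
  proof -
    have "(\<lambda>k. sP k * l^k - 2 * (diffs sP k * l^k) + diffs (diffs sP) k * l^k) sums (SP l - 2 * SP1 l + SP2 l)"
      unfolding SP_def SP1_def SP2_def
      by (intro sums_add sums_diff sums_mult summable_sums sP_summable sP1_summable sP2_summable)
    then show ?thesis by (simp add: d_def algebra_simps)
  qed
  have s1: "(\<lambda>k. d k * l^Suc k) sums (l * (SP l - 2 * SP1 l + SP2 l))"
    using sums_mult[OF s, of l] by (simp add: mult_ac)
  have s2: "(\<lambda>k. l^Suc k / fact (Suc k)) sums (exp l - 1)"
    using exp_sums[of l] sums_Suc_iff[of "\<lambda>k. l^k / fact k"] by simp
  have "d k * l^Suc k \<le> l^Suc k / fact (Suc k)" for k
  proof -
    have "ln (real k + 2) - ln (real k + 1) \<le> 1 / (real k + 1)"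
    proof -
      have "ln ((real k + 2) / (real k + 1)) \<le> (real k + 2) / (real k + 1) - 1"
        by (rule ln_le_minus_one) (auto simp: field_simps)
      then show ?thesis by (simp add: ln_div field_simps)
    qed
    then have "(ln (real k + 2) - ln (real k + 1)) / fact k \<le> 1 / (real k + 1) / fact k"
      by (rule divide_right_mono) simp
    also have "1 / (real k + 1) / fact k = 1 / fact (Suc k)" by (simp add: field_simps)
    finally have "d k \<le> 1 / fact (Suc k)"
      unfolding d_def dP_eq .
    then show ?thesis using l by (simp add: mult_right_mono divide_inverse)
  qed
  then have "l * (SP l - 2 * SP1 l + SP2 l) \<le> exp l - 1" by (rule sums_le[OF _ s1 s2])
  then have "l * (SP l - 2 * SP1 l + SP2 l) \<le> exp l" by simp
  then have "exp (-l) * (SP l - 2 * SP1 l + SP2 l) \<le> 1 / l"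
    using l by (simp add: exp_minus field_simps)
  then show ?thesis by (simp add: KP2_def)
qed

lemma KP_concave: "concave_on {0<..} KP"
  by (rule f''_le0_imp_concave[where f' = KP1 and f'' = KP2])
     (auto intro: KP_deriv KP1_deriv KP2_nonpos)

lemma poisson_sums:
  assumes l: "l \<ge> 0"
  shows "(\<lambda>k. (l^k / fact k * exp (-l)) * ln (l^k / fact k * exp (-l))) sums (- KP l)"
proof (cases "l = 0")
  case True
  have "(\<lambda>k. (l^k / fact k * exp (-l)) * ln (l^k / fact k * exp (-l))) = (\<lambda>k. 0)"
    using True by (auto simp: power_0_left)
  moreover have "KP l = 0" using True by (simp add: KP_def SP_def) (simp add: sP_def)
  ultimately show ?thesis by simp
next
  case False
  then have l: "l > 0" using l by auto
  have eq: "(l^k / fact k * exp (-l)) * ln (l^k / fact k * exp (-l))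
      = exp (-l) * (ln l * (real k * (l^k / fact k)) - sP k * l^k - l * (l^k / fact k))" for k
  proof -
    have "ln (l^k / fact k * exp (-l)) = ln (l^k / fact k) + ln (exp (-l))"
      by (rule ln_mult_pos) (use l in auto)
    also have "ln (l^k / fact k) = ln (l^k) - ln (fact k)"
      by (rule ln_divide_pos) (use l in auto)
    finally have L: "ln (l^k / fact k * exp (-l)) = real k * ln l - ln (fact k) - l"
      using l by (simp add: ln_realpow)
    show ?thesis unfolding L by (simp add: sP_def field_simps)
  qed
  have k1: "(\<lambda>k. real k * (l^k / fact k)) sums (l * exp l)"
  proof -
    have "(\<lambda>k. real (Suc k) * (l^Suc k / fact (Suc k))) = (\<lambda>k. l * (l^k / fact k))"
      by (auto simp: field_simps simp del: of_nat_Suc)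
    then have "(\<lambda>k. real (Suc k) * (l^Suc k / fact (Suc k))) sums (l * exp l)"
      using sums_mult[OF exp_sums, of l] by simp
    then show ?thesis using sums_Suc_iff[of "\<lambda>k. real k * (l^k / fact k)"] by simp
  qed
  have A: "(\<lambda>k. exp (-l) * (ln l * (real k * (l^k / fact k)) - sP k * l^k - l * (l^k / fact k)))
      sums (exp (-l) * (ln l * (l * exp l) - SP l - l * exp l))"
    unfolding SP_def
    by (intro sums_mult sums_diff k1 exp_sums summable_sums sP_summable)
  have B: "exp (-l) * (ln l * (l * exp l) - SP l - l * exp l) = - KP l"
    by (simp add: KP_def exp_minus field_simps)
  show ?thesis unfolding eq B[symmetric] by (rule A)
qed



definition Cf :: "real \<Rightarrow> nat \<Rightarrow> real" where "Cf a k = pochhammer a k / fact k"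

lemma Cf_0 [simp]: "Cf a 0 = 1" by (simp add: Cf_def)

lemma Cf_Suc: "Cf a (Suc k) = Cf a k * (a + real k) / (real k + 1)"
  by (simp add: Cf_def pochhammer_Suc field_simps)

lemma Cf_pos: "a > 0 \<Longrightarrow> Cf a k > 0"
  by (simp add: Cf_def pochhammer_pos)

lemma Cf_ge1: "a \<ge> 1 \<Longrightarrow> Cf a k \<ge> 1"
proof (induction k)
  case 0 then show ?case by simp
next
  case (Suc k)
  have "1 \<le> (a + real k) / (real k + 1)" using Suc.prems by simp
  then have "1 * 1 \<le> Cf a k * ((a + real k) / (real k + 1))"
    using Suc by (intro mult_mono) auto
  then show ?case by (simp add: Cf_Suc)
qed

lemma Cf_shift: "real (Suc k) * Cf a (Suc k) = a * Cf (a + 1) k"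
proof -
  have "pochhammer a (Suc k) = a * pochhammer (a + 1) k" by (rule pochhammer_rec)
  then show ?thesis unfolding Cf_def fact_div by simp
qed

lemma Cf_binom:
  assumes "\<bar>u\<bar> < 1"
  shows "(\<lambda>k. Cf a k * u^k) sums (1 - u) powr (-a)"
proof -
  have "(\<lambda>k. ((-a) gchoose k) * (-u)^k) sums (1 + (-u)) powr (-a)"
    by (rule gen_binomial_real) (use assms in simp)
  moreover have "((-a) gchoose k) * (-u)^k = Cf a k * u^k" for k
  proof -
    have "((-a) gchoose k) * (-u)^k = ((-1)^k * (-1)^k) * pochhammer a k / fact k * u^k"
      unfolding gbinomial_pochhammer power_minus[of u k] by simp
    also have "(-1::real)^k * (-1)^k = 1" by (simp flip: power_add)
    finally show ?thesis by (simp add: Cf_def)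
  qed
  ultimately show ?thesis by simp
qed

lemma Cf_kbinom:
  assumes "\<bar>u\<bar> < 1"
  shows "(\<lambda>k. real k * Cf a k * u^k) sums (a * u * (1 - u) powr (-a - 1))"
proof -
  have A: "(\<lambda>k. (a * u) * (Cf (a+1) k * u^k)) sums ((a * u) * (1 - u) powr (-(a+1)))"
    by (rule sums_mult, rule Cf_binom) (use assms in simp)
  have B: "(\<lambda>k. real (Suc k) * Cf a (Suc k) * u^(Suc k)) = (\<lambda>k. (a * u) * (Cf (a+1) k * u^k))"
    by (rule ext) (simp only: Cf_shift power_Suc mult_ac)
  have e: "-(a+1) = -a - 1" by simp
  have "(\<lambda>k. real (Suc k) * Cf a (Suc k) * u^(Suc k)) sums ((a * u) * (1 - u) powr (-(a+1)))"
    using A by (simp only: B)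
  then have "(\<lambda>k. real (Suc k) * Cf a (Suc k) * u^(Suc k)) sums (a * u * (1 - u) powr (-a - 1))"
    by (simp only: e)
  then show ?thesis using sums_Suc_iff[of "\<lambda>k. real k * Cf a k * u^k"] by simp
qed


definition "gN a k = Cf a k * ln (Cf a k)"

lemma Cf_ratio_lim:
  assumes "a \<ge> 1"
  shows "(\<lambda>n. norm (Cf a n ^ 2) / norm (Cf a (Suc n) ^ 2)) \<longlonglongrightarrow> 1"
proof -
  have eq: "norm (Cf a n ^ 2) / norm (Cf a (Suc n) ^ 2) = ((real n + 1) / (a + real n))^2" for n
  proof -
    have p: "Cf a n > 0" using Cf_pos[of a n] assms by simp
    have q: "a + real n > 0" using assms by simp
    have r: "Cf a (Suc n) = Cf a n * ((a + real n) / (real n + 1))" by (simp add: Cf_Suc)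
    have "norm (Cf a n ^ 2) / norm (Cf a (Suc n) ^ 2) = Cf a n ^2 / (Cf a n ^2 * ((a + real n) / (real n + 1))^2)"
      unfolding r power_mult_distrib using p q by (simp only: real_norm_def abs_mult power_abs) simp
    also have "\<dots> = ((real n + 1)/(a + real n))^2" using p q by (simp add: power_divide field_simps)
    finally show ?thesis .
  qed
  show ?thesis unfolding eq by real_asymp
qed

lemma Cf_sq_summable:
  assumes "a \<ge> 1" "\<bar>z\<bar> < 1"
  shows "summable (\<lambda>k. Cf a k ^ 2 * \<bar>z\<bar>^k)"
proof (rule summable_in_conv_radius)
  have "conv_radius (\<lambda>k. Cf a k ^ 2) = ereal 1"
    by (rule conv_radius_ratio_limit_nonzero[OF refl _ Cf_ratio_lim[OF assms(1)]]) simp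
  then show "ereal (norm \<bar>z\<bar>) < conv_radius (\<lambda>k. Cf a k ^ 2)" using assms(2) by simp
qed

lemma gN_summable:
  assumes "a \<ge> 1" "\<bar>z\<bar> < 1"
  shows "summable (\<lambda>k. gN a k * z^k)"
proof (rule summable_comparison_test)
  show "summable (\<lambda>k. Cf a k ^ 2 * \<bar>z\<bar>^k)" by (rule Cf_sq_summable[OF assms])
  show "\<exists>N. \<forall>n\<ge>N. norm (gN a n * z ^ n) \<le> Cf a n ^ 2 * \<bar>z\<bar>^n"
  proof (intro exI allI impI)
    fix n :: nat
    have c1: "Cf a n \<ge> 1" by (rule Cf_ge1[OF assms(1)])
    have l0: "ln (Cf a n) \<ge> 0" using c1 by simp
    have l1: "ln (Cf a n) \<le> Cf a n" using ln_le_minus_one[of "Cf a n"] c1 by simp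
    have "norm (gN a n * z ^ n) = Cf a n * ln (Cf a n) * \<bar>z\<bar>^n"
      using c1 l0 by (simp add: gN_def abs_mult power_abs)
    also have "\<dots> \<le> Cf a n * Cf a n * \<bar>z\<bar>^n"
      using c1 l1 by (intro mult_right_mono mult_left_mono) auto
    finally show "norm (gN a n * z ^ n) \<le> Cf a n ^ 2 * \<bar>z\<bar>^n" by (simp add: power2_eq_square)
  qed
qed

lemma gN1_summable:
  assumes "a \<ge> 1" "\<bar>z\<bar> < 1"
  shows "summable (\<lambda>k. diffs (gN a) k * z^k)"
  by (rule termdiff_converges[where K=1]) (use assms gN_summable in auto)

lemma gN2_summable:
  assumes "a \<ge> 1" "\<bar>z\<bar> < 1"
  shows "summable (\<lambda>k. diffs (diffs (gN a)) k * z^k)"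
  by (rule termdiff_converges[where K=1]) (use assms gN1_summable in auto)

definition "G a z = (\<Sum>k. gN a k * z^k)"
definition "G1 a z = (\<Sum>k. diffs (gN a) k * z^k)"
definition "G2 a z = (\<Sum>k. diffs (diffs (gN a)) k * z^k)"

lemma G_deriv: "a \<ge> 1 \<Longrightarrow> \<bar>z\<bar> < 1 \<Longrightarrow> (G a has_real_derivative G1 a z) (at z)"
  unfolding G_def[abs_def] G1_def by (rule termdiffs_strong'[where K=1]) (auto intro: gN_summable)
lemma G1_deriv: "a \<ge> 1 \<Longrightarrow> \<bar>z\<bar> < 1 \<Longrightarrow> (G1 a has_real_derivative G2 a z) (at z)"
  unfolding G1_def[abs_def] G2_def by (rule termdiffs_strong'[where K=1]) (auto intro: gN1_summable)


definition Sh :: "(nat \<Rightarrow> real) \<Rightarrow> nat \<Rightarrow> real" where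
  "Sh h k = (case k of 0 \<Rightarrow> 0 | Suc j \<Rightarrow> h j)"

lemma Sh_sums:
  assumes "summable (\<lambda>k. h k * z^k)"
  shows "(\<lambda>k. Sh h k * z^k) sums (z * (\<Sum>k. h k * z^k))"
proof -
  have "(\<lambda>k. z * (h k * z^k)) sums (z * (\<Sum>k. h k * z^k))"
    by (rule sums_mult, rule summable_sums, rule assms)
  moreover have "(\<lambda>k. Sh h (Suc k) * z^(Suc k)) = (\<lambda>k. z * (h k * z^k))"
    by (simp add: Sh_def mult_ac)
  ultimately have "(\<lambda>k. Sh h (Suc k) * z^(Suc k)) sums (z * (\<Sum>k. h k * z^k))" by simp
  then show ?thesis using sums_Suc_iff[of "\<lambda>k. Sh h k * z^k"] by (simp add: Sh_def)
qed

lemma d1: "diffs g k = real (Suc k) * g (Suc k)" by (simp add: diffs_def)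
lemma d2: "diffs (diffs g) k = real (Suc k) * real (Suc (Suc k)) * g (Suc (Suc k))"
  by (simp add: diffs_def)
lemma sd1: "Sh (diffs g) k = real k * g k"
  by (cases k) (simp_all add: Sh_def diffs_def)
lemma sd2: "Sh (diffs (diffs g)) k = real k * (real k + 1) * g (Suc k)"
  by (cases k) (simp_all add: Sh_def diffs_def algebra_simps)
lemma ssd2: "Sh (Sh (diffs (diffs g))) k = (real k - 1) * real k * g k"
proof (cases k)
  case 0 then show ?thesis by (simp add: Sh_def)
next
  case (Suc j) then show ?thesis by (cases j) (simp_all add: Sh_def diffs_def algebra_simps)
qed

definition "bc a k = a*(a+1)*gN a k - 2*(a+1)*diffs (gN a) k + 2*(a+1)*Sh (diffs (gN a)) k
   + diffs (diffs (gN a)) k - 2*Sh (diffs (diffs (gN a))) k + Sh (Sh (diffs (diffs (gN a)))) k"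

definition "Br a z = a*(a+1)*G a z - 2*(a+1)*(1-z)*G1 a z + (1-z)^2 * G2 a z"

lemma Br_sums:
  assumes "a \<ge> 1" "\<bar>z\<bar> < 1"
  shows "(\<lambda>k. bc a k * z^k) sums Br a z"
proof -
  note s0 = summable_sums[OF gN_summable[OF assms]]
  note s1 = summable_sums[OF gN1_summable[OF assms]]
  note s2 = summable_sums[OF gN2_summable[OF assms]]
  note t1 = Sh_sums[OF gN1_summable[OF assms]]
  note t2 = Sh_sums[OF gN2_summable[OF assms]]
  have t3: "(\<lambda>k. Sh (Sh (diffs (diffs (gN a)))) k * z^k) sums (z * (z * G2 a z))"
    using Sh_sums[OF sums_summable[OF t2]] t2 unfolding G2_def by (simp add: sums_iff)
  have "(\<lambda>k. a*(a+1)*(gN a k * z^k) - 2*(a+1)*(diffs (gN a) k * z^k) + 2*(a+1)*(Sh (diffs (gN a)) k * z^k)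
      + diffs (diffs (gN a)) k * z^k - 2*(Sh (diffs (diffs (gN a))) k * z^k) + Sh (Sh (diffs (diffs (gN a)))) k * z^k)
     sums (a*(a+1)*G a z - 2*(a+1)*G1 a z + 2*(a+1)*(z * G1 a z) + G2 a z - 2*(z * G2 a z) + z * (z * G2 a z))"
    unfolding G_def G1_def G2_def
    by (intro sums_add sums_diff sums_mult s0 s1 s2 t1 t2 t3[unfolded G2_def])
  moreover have "a*(a+1)*G a z - 2*(a+1)*G1 a z + 2*(a+1)*(z * G1 a z) + G2 a z - 2*(z * G2 a z) + z * (z * G2 a z)
      = Br a z" by (simp add: Br_def power2_eq_square algebra_simps)
  ultimately show ?thesis by (simp add: bc_def algebra_simps)
qed

lemma bc_eq:
  assumes "a \<ge> 1"
  shows "bc a k = (a + real k) * (a + real k + 1) * Cf a k *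
     (ln (Cf a (Suc (Suc k))) - 2 * ln (Cf a (Suc k)) + ln (Cf a k))"
proof -
  define C where "C = Cf a k"
  define L0 where "L0 = ln (Cf a k)"
  define L1 where "L1 = ln (Cf a (Suc k))"
  define L2 where "L2 = ln (Cf a (Suc (Suc k)))"
  have c1: "Cf a (Suc k) = C * (a + real k) / (real k + 1)" by (simp add: Cf_Suc C_def)
  have c2: "Cf a (Suc (Suc k)) = C * (a + real k) / (real k + 1) * (a + real k + 1) / (real k + 2)"
    by (simp add: Cf_Suc[of a "Suc k"] c1 add_ac)
  have n1: "real k + 1 \<noteq> 0" "real k + 2 \<noteq> 0" by linarith+
  have f1: "real (Suc k) * (C * (a + real k) / (real k + 1) * L1) = C*(a+real k)*L1"
    using n1 by (simp add: field_simps)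
  have f2: "real (Suc k) * (real (Suc (Suc k)) * (C * (a + real k) / (real k + 1) * (a + real k + 1) / (real k + 2) * L2))
     = C*(a+real k)*(a+real k+1)*L2"
  proof -
    have nz: "(real k + 1) * (real k + 2) \<noteq> 0" using n1 by simp
    have "C * (a + real k) / (real k + 1) * (a + real k + 1) / (real k + 2) * L2
        = (C*(a+real k)*(a+real k+1)*L2) / ((real k + 1) * (real k + 2))" by simp
    moreover have "real (Suc k) * (real (Suc (Suc k)) * W) = ((real k + 1) * (real k + 2)) * W" for W
      by (simp add: algebra_simps)
    ultimately show ?thesis
      by (simp only: times_divide_eq_right nonzero_mult_div_cancel_left[OF nz])
  qed
  have bcE: "bc a k = (a + real k) * (a + real k + 1) * C * (L2 - 2 * L1 + L0)"
    apply (simp only: bc_def d1 d2 sd1 sd2 ssd2 gN_def)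
    apply (simp only: L0_def[symmetric] L1_def[symmetric] L2_def[symmetric])
    apply (simp only: c1 c2 C_def[symmetric])
    apply (simp only: mult.assoc[of "real (Suc k)" "real (Suc (Suc k))"] f1 f2)
    apply (simp add: algebra_simps)
    done
  then show ?thesis by (simp add: C_def L0_def L1_def L2_def)
qed


lemma ln_diff_upper: "0 < (x::real) \<Longrightarrow> x < y \<Longrightarrow> ln y - ln x \<le> (y - x) / x"
proof -
  assume xy: "0 < x" "x < y"
  have "ln (y / x) \<le> y / x - 1" by (rule ln_le_minus_one) (use xy in simp)
  then show ?thesis using xy by (simp add: ln_divide_pos diff_divide_distrib)
qed

lemma ln_diff_lower: "0 < (x::real) \<Longrightarrow> x < y \<Longrightarrow> (y - x) / y \<le> ln y - ln x"
proof -
  assume xy: "0 < x" "x < y"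
  have "ln (x / y) \<le> x / y - 1" by (rule ln_le_minus_one) (use xy in simp)
  moreover have "x / y - 1 = - ((y - x) / y)" using xy by (simp add: field_simps)
  ultimately show ?thesis using xy by (simp add: ln_divide_pos)
qed

lemma bc_lower:
  assumes a: "a \<ge> 1"
  shows "bc a k \<ge> - a * Cf a (Suc k)"
proof -
  define C where "C = Cf a k"
  have C: "C > 0" using Cf_pos[of a k] a by (simp add: C_def)
  have k1: "(0::real) < real k + 1" by simp
  have ak: "0 < a + real k" using a by simp
  have c1: "Cf a (Suc k) = C * ((a + real k) / (real k + 1))" by (simp add: Cf_Suc C_def)
  have c2: "Cf a (Suc (Suc k)) = Cf a (Suc k) * ((a + real k + 1) / (real k + 2))"
    by (simp add: Cf_Suc[of a "Suc k"] add_ac)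
  have pos1: "Cf a (Suc k) > 0" using Cf_pos[of a "Suc k"] a by simp
  have l1: "ln (Cf a (Suc k)) = ln C + (ln (a + real k) - ln (real k + 1))"
    unfolding c1 using C ak k1 by (simp add: ln_mult_pos ln_divide_pos)
  have l2: "ln (Cf a (Suc (Suc k))) = ln (Cf a (Suc k)) + (ln (a + real k + 1) - ln (real k + 2))"
    unfolding c2 using pos1 ak k1 by (simp add: ln_mult_pos ln_divide_pos add_pos_pos)
  define D where "D = ln (Cf a (Suc (Suc k))) - 2 * ln (Cf a (Suc k)) + ln (Cf a k)"
  have D: "D = (ln (a + real k + 1) - ln (a + real k)) - (ln (real k + 2) - ln (real k + 1))"
    unfolding D_def l2 l1 C_def by simp
  have h1: "1 / (a + real k + 1) \<le> ln (a + real k + 1) - ln (a + real k)"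
    using ln_diff_lower[of "a + real k" "a + real k + 1"] ak by simp
  have h2: "ln (real k + 2) - ln (real k + 1) \<le> 1 / (real k + 1)"
    using ln_diff_upper[of "real k + 1" "real k + 2"] by simp
  have "(a + real k + 1) * D \<ge> (a + real k + 1) * (1 / (a + real k + 1) - 1 / (real k + 1))"
    unfolding D using h1 h2 ak by (intro mult_left_mono) auto
  also have "(a + real k + 1) * (1 / (a + real k + 1) - 1 / (real k + 1)) = - a / (real k + 1)"
  proof -
    have n: "a + real k + 1 \<noteq> 0" "real k + 1 \<noteq> 0" using ak k1 by linarith+
    have "(a + real k + 1) * (1 / (a + real k + 1) - 1 / (real k + 1)) = 1 - (a + real k + 1) / (real k + 1)"
      using n by (simp add: right_diff_distrib)
    also have "\<dots> = ((real k + 1) - (a + real k + 1)) / (real k + 1)"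
      by (simp only: diff_divide_distrib divide_self[OF n(2)])
    finally show ?thesis by simp
  qed
  finally have hD: "(a + real k + 1) * D \<ge> - a / (real k + 1)" .
  have "bc a k = ((a + real k) * C) * ((a + real k + 1) * D)"
    unfolding bc_eq[OF a] D_def C_def by (simp add: mult_ac)
  also have "\<dots> \<ge> ((a + real k) * C) * (- a / (real k + 1))"
    using hD ak C by (intro mult_left_mono) auto
  also have "((a + real k) * C) * (- a / (real k + 1)) = - a * Cf a (Suc k)"
    unfolding c1 by (simp add: field_simps)
  finally show ?thesis .
qed

lemma uBr:
  assumes a: "a \<ge> 1" and u: "0 \<le> u" "u < 1"
  shows "u * Br a u \<ge> - a * (1 - u) powr (-a)"
proof -
  have au: "\<bar>u\<bar> < 1" using u by simp
  have s1: "(\<lambda>k. bc a k * u^Suc k) sums (u * Br a u)"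
    using sums_mult[OF Br_sums[OF a au], of u] by (simp add: mult_ac)
  have b: "(\<lambda>k. Cf a k * u^k) sums (1 - u) powr (-a)" by (rule Cf_binom[OF au])
  have "(\<lambda>k. Cf a (Suc k) * u^Suc k) sums ((1 - u) powr (-a) - 1)"
    using b sums_Suc_iff[of "\<lambda>k. Cf a k * u^k"] by simp
  then have s2: "(\<lambda>k. - a * (Cf a (Suc k) * u^Suc k)) sums (- a * ((1 - u) powr (-a) - 1))"
    by (rule sums_mult)
  have "- a * (Cf a (Suc k) * u^Suc k) \<le> bc a k * u^Suc k" for k
  proof -
    have "(- a * Cf a (Suc k)) * u^Suc k \<le> bc a k * u^Suc k"
      by (rule mult_right_mono[OF bc_lower[OF a]]) (use u in simp)
    then show ?thesis by (simp add: mult_ac)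
  qed
  then have "- a * ((1 - u) powr (-a) - 1) \<le> u * Br a u" by (rule sums_le[OF _ s2 s1])
  then show ?thesis using a by (simp add: algebra_simps)
qed


definition "PP a (t::real) = (1 + t) powr (-a)"
definition "uu (t::real) = t / (1 + t)"

definition "KN a t = -(PP a t * G a (uu t)) - a * t * ln t + a * (1 + t) * ln (1 + t)"
definition "ivw (t::real) = inverse (1 + t)"

lemma ivw_deriv: "t > 0 \<Longrightarrow> (ivw has_real_derivative (- (ivw t * ivw t))) (at t)"
  unfolding ivw_def[abs_def]
  by (rule derivative_eq_intros refl | simp)+

definition "A1 a t = PP a t * (-a * ivw t * G a (uu t) + ivw t^2 * G1 a (uu t))"
definition "KN1 a t = - A1 a t - a * ln t + a * ln (1 + t)"
definition "A2 a t = PP a t * (a * (a + 1) * ivw t^2 * G a (uu t) - 2 * (a + 1) * ivw t^3 * G1 a (uu t)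
   + ivw t^4 * G2 a (uu t))"
definition "KN2 a t = - A2 a t - a / t + a / (1 + t)"

lemma uu_bounds: "t \<ge> 0 \<Longrightarrow> 0 \<le> uu t \<and> uu t < 1"
proof -
  assume t: "t \<ge> 0"
  then have p: "1 + t > 0" by simp
  show ?thesis using t p by (simp add: uu_def divide_less_eq)
qed

lemma one_minus_uu: "t \<ge> 0 \<Longrightarrow> 1 - uu t = 1 / (1 + t)"
proof -
  assume t: "t \<ge> 0"
  then have p: "1 + t \<noteq> 0" by simp
  show ?thesis using p by (simp add: uu_def field_simps)
qed

lemma PP_deriv: "t > 0 \<Longrightarrow> (PP a has_real_derivative (- a * PP a t * ivw t)) (at t)"
proof -
  assume t: "t > 0"
  have "((\<lambda>t. (1 + t) powr (-a)) has_real_derivative ((-a) * (1 + t) powr (-a - 1)) * 1) (at t)"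
    by (rule DERIV_chain'[where f = "\<lambda>t. 1 + t"]) (auto intro!: derivative_eq_intros has_real_derivative_powr simp: t add_pos_pos)
  moreover have "(1 + t) powr (-a - 1) = (1 + t) powr (-a) / (1 + t)"
    using t by (simp add: powr_diff)
  ultimately show ?thesis unfolding PP_def[abs_def] by (simp add: divide_inverse ivw_def mult.assoc)
qed

lemma uu_deriv: "t > 0 \<Longrightarrow> (uu has_real_derivative ivw t^2) (at t)"
  unfolding uu_def[abs_def] ivw_def
  by (rule derivative_eq_intros refl | simp)+ (simp add: field_simps power2_eq_square)

lemma Gu_deriv: "a \<ge> 1 \<Longrightarrow> t > 0 \<Longrightarrow> ((\<lambda>t. G a (uu t)) has_real_derivative G1 a (uu t) * ivw t^2) (at t)"
  by (rule DERIV_chain'[OF uu_deriv G_deriv]) (auto simp: uu_def)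

lemma G1u_deriv: "a \<ge> 1 \<Longrightarrow> t > 0 \<Longrightarrow> ((\<lambda>t. G1 a (uu t)) has_real_derivative G2 a (uu t) * ivw t^2) (at t)"
  by (rule DERIV_chain'[OF uu_deriv G1_deriv]) (auto simp: uu_def)

lemma KN_deriv: "a \<ge> 1 \<Longrightarrow> t > 0 \<Longrightarrow> (KN a has_real_derivative KN1 a t) (at t)"
  unfolding KN_def[abs_def] KN1_def A1_def
  apply (rule derivative_eq_intros PP_deriv Gu_deriv ivw_deriv refl | assumption | simp)+
  apply (simp add: algebra_simps power2_eq_square)
  done


lemma KN1_deriv: "a \<ge> 1 \<Longrightarrow> t > 0 \<Longrightarrow> (KN1 a has_real_derivative KN2 a t) (at t)"
  unfolding KN1_def[abs_def] KN2_def A1_def A2_def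
  apply (rule derivative_eq_intros PP_deriv Gu_deriv G1u_deriv ivw_deriv refl | assumption | simp)+
  apply (simp add: algebra_simps power2_eq_square power3_eq_cube power4_eq_xxxx divide_inverse)
  done

lemma pow_one_minus_uu: "t \<ge> 0 \<Longrightarrow> (1 - uu t) powr r = (1 + t) powr (-r)"
  by (simp add: one_minus_uu powr_divide powr_minus_divide)

lemma KN2_nonpos:
  assumes a: "a \<ge> 1" and t: "t > 0"
  shows "KN2 a t \<le> 0"
proof -
  define u where "u = uu t"
  define w where "w = ivw t"
  have u: "0 \<le> u" "u < 1" using uu_bounds[of t] t by (auto simp: u_def)
  have t1: "1 + t > 0" using t by simp
  have w1: "w * (1 + t) = 1" using t1 by (simp add: w_def ivw_def)
  have w0: "w > 0" using t1 by (simp add: w_def ivw_def)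
  have omu: "1 - u = w" using one_minus_uu[of t] t by (simp add: u_def w_def ivw_def divide_inverse)
  have ut: "u = t * w" by (simp add: u_def w_def uu_def ivw_def divide_inverse)
  have A2: "A2 a t = PP a t * w^2 * Br a u"
    unfolding A2_def Br_def omu u_def[symmetric] w_def[symmetric]
    by (simp add: algebra_simps power2_eq_square power3_eq_cube power4_eq_xxxx)
  have P: "PP a t > 0" using t1 by (simp add: PP_def)
  have Pa: "PP a t * (1 + t) powr a = 1"
    using t1 by (simp add: PP_def flip: powr_add)
  have "u * Br a u \<ge> - a * (1 + t) powr a"
    using uBr[OF a u] pow_one_minus_uu[of t "-a"] t by (simp add: u_def)
  then have "(PP a t * w) * (u * Br a u) \<ge> (PP a t * w) * (- a * (1 + t) powr a)"
    using P w0 by (intro mult_left_mono) auto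
  also have "(PP a t * w) * (- a * (1 + t) powr a) = - a * w"
    using Pa by (simp add: algebra_simps)
  also have "(PP a t * w) * (u * Br a u) = t * A2 a t"
    unfolding A2 ut by (simp add: algebra_simps power2_eq_square)
  finally have tA2: "t * A2 a t \<ge> - a * w" .
  have e1: "a / (1 + t) = a * w" by (simp add: w_def ivw_def divide_inverse)
  have e2: "t * (a / t) = a" using t by simp
  have "t * KN2 a t = - (t * A2 a t) - t * (a / t) + t * (a / (1 + t))"
    unfolding KN2_def by (simp only: ring_distribs mult_minus_right)
  also have "\<dots> = - (t * A2 a t) - a + a * t * w" unfolding e1 e2 by (simp add: algebra_simps)
  also have "\<dots> \<le> a * w - a + a * t * w" using tA2 by simp
  also have "\<dots> = a * (w * (1 + t)) - a" by (simp add: algebra_simps)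
  also have "\<dots> = 0" using w1 by simp
  finally have "t * KN2 a t \<le> 0" .
  then show ?thesis using t by (simp add: mult_le_0_iff)
qed

lemma KN_concave: "a \<ge> 1 \<Longrightarrow> concave_on {0<..} (KN a)"
  by (rule f''_le0_imp_concave[where f' = "KN1 a" and f'' = "KN2 a"])
     (auto intro: KN_deriv KN1_deriv KN2_nonpos)


lemma KN_0: "KN a 0 = 0"
  by (simp add: KN_def PP_def uu_def G_def) (simp add: gN_def)

lemma nb_sums:
  assumes a: "a \<ge> 1" and t: "t \<ge> 0"
  shows "(\<lambda>k. (Cf a k * uu t ^ k * PP a t) * ln (Cf a k * uu t ^ k * PP a t)) sums (- KN a t)"
proof (cases "t = 0")
  case True
  have "(\<lambda>k. (Cf a k * uu t ^ k * PP a t) * ln (Cf a k * uu t ^ k * PP a t)) = (\<lambda>k. 0)"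
    using True by (auto simp: uu_def PP_def power_0_left)
  then show ?thesis using True KN_0 by simp
next
  case False
  then have t: "t > 0" using t by simp
  define u where "u = uu t"
  define P where "P = PP a t"
  have t1: "1 + t > 0" using t by simp
  have u0: "u > 0" using t by (simp add: u_def uu_def)
  have u1: "u < 1" using uu_bounds[of t] t by (simp add: u_def)
  have au: "\<bar>u\<bar> < 1" using u0 u1 by simp
  have P0: "P > 0" using t1 by (simp add: P_def PP_def)
  have eq: "(Cf a k * u ^ k * P) * ln (Cf a k * u ^ k * P) =
      P * (gN a k * u^k) + (ln u * P) * (real k * Cf a k * u^k) + (ln P * P) * (Cf a k * u^k)" for k
  proof -
    have c: "Cf a k > 0" using Cf_pos[of a k] a by simp
    have "ln (Cf a k * u ^ k * P) = ln (Cf a k) + real k * ln u + ln P"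
      using c u0 P0 by (simp add: ln_mult_pos ln_realpow)
    then show ?thesis by (simp add: gN_def algebra_simps)
  qed
  have S: "(\<lambda>k. P * (gN a k * u^k) + (ln u * P) * (real k * Cf a k * u^k) + (ln P * P) * (Cf a k * u^k))
      sums (P * G a u + (ln u * P) * (a * u * (1 - u) powr (-a - 1)) + (ln P * P) * (1 - u) powr (-a))"
    unfolding G_def
    by (intro sums_add sums_mult summable_sums gN_summable[OF a au] Cf_kbinom[OF au] Cf_binom[OF au])
  have r1: "(1 - u) powr (-a) = (1 + t) powr a" using pow_one_minus_uu[of t "-a"] t by (simp add: u_def)
  have r2: "(1 - u) powr (-a - 1) = (1 + t) powr (a + 1)" using pow_one_minus_uu[of t "-a-1"] t by (simp add: u_def add.commute)
  have Pa: "P * (1 + t) powr a = 1"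
  proof -
    have "P * (1 + t) powr a = (1 + t) powr (-a + a)" by (simp only: P_def PP_def powr_add)
    also have "\<dots> = 1" using t1 by simp
    finally show ?thesis .
  qed
  have Pa1: "P * (1 + t) powr (a + 1) = 1 + t"
  proof -
    have "P * (1 + t) powr (a + 1) = (1 + t) powr (-a + (a + 1))" by (simp only: P_def PP_def powr_add)
    also have "\<dots> = 1 + t" using t1 by simp
    finally show ?thesis .
  qed
  have lP: "ln P = - a * ln (1 + t)" by (simp add: P_def PP_def)
  have lu: "ln u = ln t - ln (1 + t)" using t t1 by (simp add: u_def uu_def ln_divide_pos)
  have ut: "u * (1 + t) = t" using t1 by (simp add: u_def uu_def)
  have "P * G a u + (ln u * P) * (a * u * (1 - u) powr (-a - 1)) + (ln P * P) * (1 - u) powr (-a)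
      = P * G a u + ln u * a * (u * (P * (1 + t) powr (a + 1))) + ln P * (P * (1 + t) powr a)"
    unfolding r1 r2 by (simp add: algebra_simps)
  also have "\<dots> = P * G a u + ln u * a * t + ln P" unfolding Pa Pa1 ut by simp
  also have "\<dots> = - KN a t" unfolding lP lu by (simp add: KN_def P_def u_def algebra_simps)
  finally have "(\<lambda>k. (Cf a k * u ^ k * P) * ln (Cf a k * u ^ k * P)) sums (- KN a t)"
    using S unfolding eq by simp
  then show ?thesis by (simp add: u_def P_def)
qed

lemma nb_le1:
  assumes a: "a \<ge> 1" and t: "t \<ge> 0"
  shows "Cf a k * uu t ^ k * PP a t \<le> 1"
proof -
  have au: "\<bar>uu t\<bar> < 1" and u0: "uu t \<ge> 0" using uu_bounds[OF t] by auto
  have "Cf a k * uu t ^ k \<le> (1 - uu t) powr (-a)"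
  proof (rule term_le_sums[OF Cf_binom[OF au]])
    fix n
    have "Cf a n > 0" using Cf_pos[of a n] a by simp
    then show "0 \<le> Cf a n * uu t ^ n" using u0 by simp
  qed
  also have "\<dots> = (1 + t) powr a" using pow_one_minus_uu[of t "-a"] t by simp
  finally have "Cf a k * uu t ^ k * PP a t \<le> (1 + t) powr a * PP a t"
    by (rule mult_right_mono) (simp add: PP_def)
  also have "(1 + t) powr a * PP a t = (1 + t) powr (a + - a)" by (simp only: PP_def powr_add)
  also have "\<dots> = 1" using t by simp
  finally show ?thesis .
qed


lemma ent_from_sums:
  assumes s: "(\<lambda>k. p k * ln (p k)) sums v" and p0: "\<And>k. 0 \<le> p k" and p1: "\<And>k. p k \<le> (1::real)"
  shows "- (\<Sum>k. p k * ln (p k)) = - v \<and> - v \<ge> 0"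
proof
  show "- (\<Sum>k. p k * ln (p k)) = - v" using s by (simp add: sums_iff)
  have "v \<le> 0"
    by (rule sums_le[OF _ s sums_zero]) (use p0 p1 plnp_nonpos in auto)
  then show "- v \<ge> 0" by simp
qed

lemma final_assembly:
  fixes H K :: "real \<Rightarrow> real"
  assumes conc: "concave_on {0<..} K" and b: "b > 0" and K0: "K 0 = 0"
    and HK: "\<And>x. x \<ge> 0 \<Longrightarrow> H x = K (b * x) \<and> H x \<ge> 0"
  shows "concave_on {0..} H \<and> mono_on {0..} H"
proof -
  have h1: "H x = K (b * x)" if "x > 0" for x using HK[of x] that by linarith
  have h2: "H x \<ge> 0" if "x \<ge> 0" for x using HK[of x] that by blast
  have c1: "concave_on {0<..} H" by (rule concave_scale[OF conc b h1])
  have H0: "H 0 = 0" using HK[of 0] K0 by simp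
  have c2: "concave_on {0..} H" by (rule concave_extend0[OF c1 h2 H0])
  moreover have "mono_on {0..} H" by (rule concave_mono[OF c2 h2])
  ultimately show ?thesis by simp
qed

lemma p_basis_pois: "\<not> c > 0 \<Longrightarrow> p_basis c n k x = (n * x)^k / fact k * exp (- (n * x))"
  by (simp add: p_basis_def)

lemma p_basis_nb:
  assumes c: "c > 0" and x: "x \<ge> 0"
  shows "p_basis c n k x = Cf (n / c) k * uu (c * x) ^ k * PP (n / c) (c * x)"
proof -
  define a where "a = n / c"
  define t where "t = c * x"
  have t: "t \<ge> 0" using c x by (simp add: t_def)
  have t1: "1 + t > 0" using t by simp
  have e1: "(-1) ^ k * ((- n / c) gchoose k) = Cf a k"
  proof -
    have "(- n / c) = - a" by (simp add: a_def)
    then have "(-1) ^ k * ((- n / c) gchoose k) = ((-1)^k * (-1)^k) * pochhammer a k / fact k"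
      by (simp add: gbinomial_pochhammer)
    also have "(-1::real)^k * (-1)^k = 1" by (simp flip: power_add)
    finally show ?thesis by (simp add: Cf_def)
  qed
  have e2: "t ^ k * (1 + t) powr (- n / c - real k) = uu t ^ k * PP a t"
  proof -
    have "(1 + t) powr (- n / c - real k) = (1 + t) powr (-a) / (1 + t) ^ k"
      using t1 by (simp add: a_def powr_diff powr_realpow)
    then show ?thesis by (simp add: uu_def PP_def power_divide)
  qed
  have "p_basis c n k x = ((-1) ^ k * ((- n / c) gchoose k)) * (t ^ k * (1 + t) powr (- n / c - real k))"
    using c by (simp add: p_basis_def t_def mult_ac)
  also have "\<dots> = Cf a k * uu t ^ k * PP a t" unfolding e1 e2 by (simp add: mult_ac)
  finally show ?thesis by (simp add: a_def t_def)
qed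

theorem theorem2p1:
  fixes c n :: real
  assumes "c \<ge> 0" and "n > c"
  shows "concave_on {0..} (shannon_entropy c n) \<and> mono_on {0..} (shannon_entropy c n)"
proof (cases "c > 0")
  case False
  then have n: "n > 0" using assms by simp
  show ?thesis
  proof (rule final_assembly[OF KP_concave n])
    show "KP 0 = 0" by (simp add: KP_def SP_def) (simp add: sP_def)
    fix x :: real assume x: "x \<ge> 0"
    define l where "l = n * x"
    have l: "l \<ge> 0" using n x by (simp add: l_def)
    have pe: "p_basis c n k x = l^k / fact k * exp (-l)" for k
      using p_basis_pois[OF False] by (simp add: l_def)
    have p0: "0 \<le> l^k / fact k * exp (-l)" for k using l by simp
    have p1: "l^k / fact k * exp (-l) \<le> 1" for k
    proof -
      have "l^k / fact k \<le> exp l" by (rule term_le_sums[OF exp_sums]) (use l in simp)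
      then have "l^k / fact k * exp (-l) \<le> exp l * exp (-l)" by (rule mult_right_mono) simp
      then show ?thesis by (simp add: exp_minus)
    qed
    have E: "- (\<Sum>k. (l^k / fact k * exp (-l)) * ln (l^k / fact k * exp (-l))) = - (- KP l) \<and> - (- KP l) \<ge> 0"
      by (rule ent_from_sums[OF poisson_sums[OF l]]) (use p0 p1 in auto)
    show "shannon_entropy c n x = KP (n * x) \<and> shannon_entropy c n x \<ge> 0"
      using E unfolding shannon_entropy_def pe by (simp add: l_def)
  qed
next
  case True
  define a where "a = n / c"
  have a: "a \<ge> 1" using True assms by (simp add: a_def)
  show ?thesis
  proof (rule final_assembly[OF KN_concave[OF a] True])
    show "KN a 0 = 0" by (rule KN_0)
    fix x :: real assume x: "x \<ge> 0"
    define t where "t = c * x"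
    have t: "t \<ge> 0" using True x by (simp add: t_def)
    have pe: "p_basis c n k x = Cf a k * uu t ^ k * PP a t" for k
      using p_basis_nb[OF True x] by (simp add: a_def t_def)
    have p0: "0 \<le> Cf a k * uu t ^ k * PP a t" for k
      using Cf_pos[of a k] a uu_bounds[OF t] by (simp add: PP_def)
    have p1: "Cf a k * uu t ^ k * PP a t \<le> 1" for k by (rule nb_le1[OF a t])
    have E: "- (\<Sum>k. (Cf a k * uu t ^ k * PP a t) * ln (Cf a k * uu t ^ k * PP a t)) = - (- KN a t) \<and> - (- KN a t) \<ge> 0"
      by (rule ent_from_sums[OF nb_sums[OF a t]]) (use p0 p1 in auto)
    show "shannon_entropy c n x = KN a (c * x) \<and> shannon_entropy c n x \<ge> 0"
      using E unfolding shannon_entropy_def pe by (simp add: t_def)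
  qed
qed


end
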